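(* Let $d,\ell,s,m\in\mathbb{N}$ with $d\ge\ell$, let $T\subseteq\mathbb{F}$ be a subset of size $n$, and let $r=s-\lfloor\frac{d-\ell}{n}\rfloor$. Let $Q,R\in\mathbb{F}[x]$ be univariate polynomials of degree at most $\ell$, and let $h\colon T\to\mathbb{F}_{<r}[z]$ and $w\colon T\times[r]\to\mathbb{Z}_{\ge0}$ be functions such that $w(a,i)\le\frac{n^{m-1}}{2}\big((s-i)-\frac{d-\ell}{n}\big)$ for every $(a,i)\in T\times[r]$. If $Q\ne R$, then \[\Gamma^{s,d,\ell}_w(h,Q)+\Gamma^{s,d,\ell}_w(h,R)\ge n^m\Big(s-\frac dn\Big).\]
   Context: $\mathbb{F}$ is a field and $[r]=\{0,\dots,r-1\}$. For $i\in[r+1]$, $A_i(h,R)=\{a\in T:\max\{j\in[r+1]:h(a)\equiv R(a+z)\bmod\langle z\rangle^j\}=i\}$, and \[\Gamma^{s,d,\ell}_w(h,R)=\sum_{i=0}^{r-1}\sum_{a\in A_i(h,R)}\max\Big\{n^{m-1}\Big((s-i)-\tfrac{d-\ell}{n}\Big)-w(a,i),\max_{j<i}w(a,j)\Big\}+\sum_{a\in A_r(h,R)}\max_{j<r}w(a,j)\] (maxima over empty sets ignored). *)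

theory Defs
  imports Complex_Main "HOL-Computational_Algebra.Polynomial"
begin

definition agree_order :: "('a::field \<Rightarrow> 'a poly) \<Rightarrow> 'a poly \<Rightarrow> nat \<Rightarrow> 'a \<Rightarrow> nat" where
  "agree_order h R r a = Max {j. j \<le> r \<and> monom 1 j dvd (h a - pcompose R [:a, 1:])}"

definition A_set :: "'a::field set \<Rightarrow> ('a \<Rightarrow> 'a poly) \<Rightarrow> 'a poly \<Rightarrow> nat \<Rightarrow> nat \<Rightarrow> 'a set" where
  "A_set T h R r i = {a \<in> T. agree_order h R r a = i}"

text \<open>Gamma^{s,d,l}_w(h,R), with n = card T and r given as an integer
  (only nonnegative r gives nonempty index ranges). Maxima over empty sets are ignored.\<close>
definition Gamma :: "'a::field set \<Rightarrow> nat \<Rightarrow> nat \<Rightarrow> nat \<Rightarrow> nat \<Rightarrow> int \<Rightarrow>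
    ('a \<Rightarrow> nat \<Rightarrow> nat) \<Rightarrow> ('a \<Rightarrow> 'a poly) \<Rightarrow> 'a poly \<Rightarrow> real" where
  "Gamma T m s d l r w h R =
     (let n = card T; rr = nat r in
       (\<Sum>i<rr. \<Sum>a\<in>A_set T h R rr i.
          (let X = real n powi (int m - 1) * ((real s - real i) - (real d - real l) / real n)
                   - real (w a i)
           in if i = 0 then X else max X (real (Max {w a j | j. j < i}))))
       + (if rr > 0 then (\<Sum>a\<in>A_set T h R rr rr. real (Max {w a j | j. j < rr})) else 0))"

end

theory Submission
  imports Defs
begin


lemma sum_count_le_size: "finite T \<Longrightarrow> (\<Sum>a\<in>T. count M a) \<le> size M"
proof (induction M)
  case empty then show ?case by simp
next
  case (add x M)
  have "(\<Sum>a\<in>T. count (add_mset x M) a) = (\<Sum>a\<in>T. count M a + (if a = x then 1 else 0))"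
    by (intro sum.cong) auto
  also have "\<dots> = (\<Sum>a\<in>T. count M a) + (if x \<in> T then 1 else 0)"
    using add.prems by (simp add: sum.distrib)
  finally show ?case using add by auto
qed

lemma sum_order_le:
  fixes p :: "'a::idom poly"
  assumes "p \<noteq> 0" "finite T"
  shows "(\<Sum>a\<in>T. order a p) \<le> degree p"
proof -
  have "(\<Sum>a\<in>T. order a p) = (\<Sum>a\<in>T. count (proots p) a)" using assms by simp
  also have "\<dots> \<le> size (proots p)" using sum_count_le_size assms by blast
  also have "\<dots> \<le> degree p" by (rule size_proots_le)
  finally show ?thesis .
qed

lemma pcompose_X_pow: "pcompose ([:0,1:]^k) q = q^k"
  by (induction k) (simp_all add: pcompose_mult pcompose_pCons pcompose_1)

lemma shift_dvd:
  fixes p :: "'a::field poly"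
  assumes "monom 1 k dvd pcompose p [:a,1:]"
  shows "[:-a,1:]^k dvd p"
proof -
  obtain c where c: "pcompose p [:a,1:] = monom 1 k * c" using assms by (auto elim: dvdE)
  have "p = pcompose (pcompose p [:a,1:]) [:-a,1:]"
    by (simp add: pcompose_assoc[symmetric] pcompose_pCons)
  also have "\<dots> = [:-a,1:]^k * pcompose c [:-a,1:]"
    by (simp add: c pcompose_mult monom_altdef pcompose_X_pow)
  finally show ?thesis by (metis dvd_triv_left)
qed

lemma monom_dvd_mono: "k \<le> j \<Longrightarrow> monom (1::'a::field) k dvd monom 1 j"
  by (metis le_add_diff_inverse mult_monom mult_1 dvd_triv_left)



definition Gt :: "real \<Rightarrow> real \<Rightarrow> nat \<Rightarrow> nat \<Rightarrow> (nat \<Rightarrow> nat) \<Rightarrow> nat \<Rightarrow> real" where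
 "Gt N \<delta> s rr w i = (if i < rr then (let X = N * ((real s - real i) - \<delta>) - real (w i)
     in if i = 0 then X else max X (real (Max {w j | j. j < i})))
   else real (Max {w j | j. j < rr}))"

lemma Max_w_ge: "k < i \<Longrightarrow> w k \<le> Max {w j | j. j < (i::nat)}"
proof -
  assume "k < i"
  have "{w j | j. j < i} = w ` {..<i}" by auto
  then show ?thesis using \<open>k < i\<close> by (simp add: Max_ge)
qed

lemma Gt_X: "i < rr \<Longrightarrow> Gt N \<delta> s rr w i \<ge> N * ((real s - real i) - \<delta>) - real (w i)"
  by (simp add: Gt_def Let_def)

lemma Gt_w: "k < i \<Longrightarrow> i \<le> rr \<Longrightarrow> Gt N \<delta> s rr w i \<ge> real (w k)"
  using Max_w_ge[of k i w] Max_w_ge[of k rr w]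
  by (auto simp add: Gt_def Let_def)

lemma Gt_rr: "0 < rr \<Longrightarrow> Gt N \<delta> s rr w rr \<ge> 0"
  by (simp add: Gt_def)

lemma pair_bound_le:
  assumes "N \<ge> 0" "i \<le> j" "j \<le> rr" "0 < rr" "real s - real rr \<le> \<delta>"
    and "\<forall>k<rr. 2 * real (w k) \<le> N * ((real s - real k) - \<delta>)"
  shows "Gt N \<delta> s rr w i + Gt N \<delta> s rr w j \<ge> N * (real s - \<delta>) - N * real (min i j)"
proof (cases "i < j")
  case True
  then have "i < rr" using assms by simp
  then show ?thesis using Gt_X[where i=i and rr=rr and N=N and \<delta>=\<delta> and s=s and w=w] Gt_w[where k=i and i=j and rr=rr and N=N and \<delta>=\<delta> and s=s and w=w] True assms
    by (simp add: algebra_simps)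
next
  case False
  then have ij: "i = j" using assms by simp
  show ?thesis
  proof (cases "i < rr")
    case True
    then show ?thesis using Gt_X[where i=i and rr=rr and N=N and \<delta>=\<delta> and s=s and w=w] assms(6) ij
      by (auto simp add: algebra_simps)
  next
    case False
    then have "i = rr" using assms ij by simp
    moreover have "N * (real s - \<delta>) - N * real rr \<le> 0"
    proof -
      have "N * (real s - \<delta>) - N * real rr = N * (real s - real rr - \<delta>)" by (simp add: algebra_simps)
      also have "\<dots> \<le> 0" using assms by (intro mult_nonneg_nonpos) auto
      finally show ?thesis .
    qed
    ultimately show ?thesis using Gt_rr[where rr=rr and N=N and \<delta>=\<delta> and s=s and w=w] ij assms by simp
  qed
qed

lemma pair_bound:
  assumes "N \<ge> 0" "i \<le> rr" "j \<le> rr" "0 < rr" "real s - real rr \<le> \<delta>"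
    and "\<forall>k<rr. 2 * real (w k) \<le> N * ((real s - real k) - \<delta>)"
  shows "Gt N \<delta> s rr w i + Gt N \<delta> s rr w j \<ge> N * (real s - \<delta>) - N * real (min i j)"
proof (cases "i \<le> j")
  case True then show ?thesis using pair_bound_le assms by blast
next
  case False then show ?thesis using pair_bound_le[where i=j and j=i] assms
    by (simp add: min.commute add.commute)
qed

lemma sum_regroup:
  fixes f :: "'a \<Rightarrow> nat" and k :: nat
  assumes "finite T" "\<forall>a\<in>T. f a \<le> k"
  shows "(\<Sum>i<k. \<Sum>a\<in>{a\<in>T. f a = i}. F a i) + (\<Sum>a\<in>{a\<in>T. f a = k}. G a)
     = (\<Sum>a\<in>T. if f a < k then F a (f a) else (G a :: real))"
proof -
  have "(\<Sum>i<k. \<Sum>a\<in>{a\<in>T. f a = i}. F a i) = (\<Sum>i<k. \<Sum>a\<in>T. if f a = i then F a i else 0)"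
    using assms(1) by (simp add: sum.inter_filter)
  also have "\<dots> = (\<Sum>a\<in>T. \<Sum>i<k. if f a = i then F a i else 0)" by (rule sum.swap)
  also have "\<dots> = (\<Sum>a\<in>T. if f a < k then F a (f a) else 0)"
  proof (intro sum.cong refl)
    fix x assume "x \<in> T"
    have e1: "(\<Sum>i<k. if f x = i then F x i else 0) = (\<Sum>i<k. if f x = i then F x (f x) else 0)"
      by (rule sum.cong) auto
    have e2: "(\<Sum>i<k. if f x = i then F x (f x) else 0) = (if f x < k then F x (f x) else 0)"
      by (subst sum.delta'[OF finite_lessThan]) simp
    show "(\<Sum>i<k. if f x = i then F x i else 0) = (if f x < k then F x (f x) else 0)"
      by (simp only: e1 e2)
  qed
  finally have 1: "(\<Sum>i<k. \<Sum>a\<in>{a\<in>T. f a = i}. F a i) = (\<Sum>a\<in>T. if f a < k then F a (f a) else 0)" .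
  have 2: "(\<Sum>a\<in>{a\<in>T. f a = k}. G a) = (\<Sum>a\<in>T. if f a = k then G a else 0)"
    using assms(1) by (simp add: sum.inter_filter)
  show ?thesis unfolding 1 2 sum.distrib[symmetric]
    by (intro sum.cong refl) (use assms(2) in auto)
qed



lemma ao_props:
  fixes h :: "'a::field \<Rightarrow> 'a poly"
  shows "agree_order h P r a \<le> r \<and> monom 1 (agree_order h P r a) dvd (h a - pcompose P [:a,1:])"
proof -
  let ?S = "{j. j \<le> r \<and> monom 1 j dvd (h a - pcompose P [:a, 1:])}"
  have fin: "finite ?S" by (rule finite_subset[of _ "{..r}"]) auto
  have "0 \<in> ?S" by (simp add: monom_0 one_pCons[symmetric])
  then have "?S \<noteq> {}" by blast
  then have "Max ?S \<in> ?S" using fin by (rule Max_in[rotated])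
  then show ?thesis unfolding agree_order_def by simp
qed

lemma min_ao_le_order:
  fixes h :: "'a::field \<Rightarrow> 'a poly"
  assumes "Q \<noteq> R"
  shows "min (agree_order h Q r a) (agree_order h R r a) \<le> order a (Q - R)"
proof -
  let ?k = "min (agree_order h Q r a) (agree_order h R r a)"
  have "monom 1 ?k dvd (h a - pcompose Q [:a,1:])"
    using ao_props[of h Q r a] monom_dvd_mono[of ?k "agree_order h Q r a"] by (meson dvd_trans min.cobounded1 min.cobounded2)
  moreover have "monom 1 ?k dvd (h a - pcompose R [:a,1:])"
    using ao_props[of h R r a] monom_dvd_mono[of ?k "agree_order h R r a"] by (meson dvd_trans min.cobounded1 min.cobounded2)
  ultimately have "monom 1 ?k dvd ((h a - pcompose R [:a,1:]) - (h a - pcompose Q [:a,1:]))"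
    by (rule dvd_diff[rotated])
  then have "monom 1 ?k dvd pcompose (Q - R) [:a,1:]" by (simp add: pcompose_diff)
  then have "[:-a,1:]^?k dvd (Q - R)" by (rule shift_dvd)
  then show ?thesis using assms by (simp add: order_divides)
qed


lemma Gamma_unfold:
  assumes "card T = n" "rr = nat r" "rr > 0"
    and ao_def: "\<And>P a. ao P a = agree_order h P rr a"
    and N_def: "N = real n powi (int m - 1)" and \<delta>_def: "\<delta> = (real d - real l) / real n"
  shows "Gamma T m s d l r w h P =
        (\<Sum>i<rr. \<Sum>a\<in>{a\<in>T. ao P a = i}.
          (let X = N * ((real s - real i) - \<delta>) - real (w a i)
           in if i = 0 then X else max X (real (Max {w a j | j. j < i}))))
        + (\<Sum>a\<in>{a\<in>T. ao P a = rr}. real (Max {w a j | j. j < rr}))"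
  unfolding Gamma_def A_set_def assms(1) assms(2)[symmetric] ao_def[symmetric]
          N_def[symmetric] \<delta>_def[symmetric] if_P[OF assms(3)] Let_def
  by (rule refl)


theorem lemma8p3:
  fixes d l s m :: nat and T :: "'a::field set" and n :: nat and r :: int
    and Q R :: "'a poly" and h :: "'a \<Rightarrow> 'a poly" and w :: "'a \<Rightarrow> nat \<Rightarrow> nat"
  assumes "d \<ge> l"
    and "finite T" and "T \<noteq> {}" and "card T = n"
    and "r = int s - \<lfloor>(real d - real l) / real n\<rfloor>"
    and "degree Q \<le> l" and "degree R \<le> l"
    and "\<forall>a\<in>T. h a = 0 \<or> int (degree (h a)) < r"
    and "\<forall>a\<in>T. \<forall>i::nat. int i < r \<longrightarrow>
           real (w a i) \<le> real n powi (int m - 1) / 2 * ((real s - real i) - (real d - real l) / real n)"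
    and "Q \<noteq> R"
  shows "Gamma T m s d l r w h Q + Gamma T m s d l r w h R \<ge> real n ^ m * (real s - real d / real n)"
proof -
  have npos: "n > 0" using assms(2,3) unfolding assms(4)[symmetric] by (simp add: card_gt_0_iff)
  define \<delta> where "\<delta> = (real d - real l) / real n"
  define N where "N = real n powi (int m - 1)"
  have N0: "N \<ge> 0" unfolding N_def by (rule zero_le_power_int) simp
  have nN: "real n * N = real n ^ m"
  proof -
    have "real n powi (int m - 1 + 1) = N * real n" unfolding N_def
      using npos by (intro power_int_add_1) simp
    then show ?thesis by (simp add: mult.commute)
  qed
  have dl: "real d / real n = \<delta> + real l / real n"
    unfolding \<delta>_def by (simp add: diff_divide_distrib)
  show ?thesis
  proof (cases "r \<le> 0")
    case True
    then have "nat r = 0" by simp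
    then have G0: "Gamma T m s d l r w h P = 0" for P
      unfolding Gamma_def by (simp add: Let_def)
    have "real s \<le> \<delta>"
    proof -
      have "int s \<le> \<lfloor>\<delta>\<rfloor>" using True assms(5) unfolding \<delta>_def by simp
      then have "real s \<le> real_of_int \<lfloor>\<delta>\<rfloor>" by linarith
      then show ?thesis by linarith
    qed
    moreover have "real l / real n \<ge> 0" by simp
    ultimately have "real s - real d / real n \<le> 0" using dl by linarith
    then have "real n ^ m * (real s - real d / real n) \<le> 0"
      by (intro mult_nonneg_nonpos) auto
    then show ?thesis by (simp add: G0)
  next
    case False
    define rr where "rr = nat r"
    have rrpos: "rr > 0" and rr_r: "int rr = r" using False unfolding rr_def by auto
    define ao where "ao P a = agree_order h P rr a" for P a
    have ao_le: "ao P a \<le> rr" for P a unfolding ao_def using ao_props by blast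
    have Gam: "Gamma T m s d l r w h P = (\<Sum>a\<in>T. Gt N \<delta> s rr (w a) (ao P a))" for P
    proof -
      have "Gamma T m s d l r w h P =
        (\<Sum>i<rr. \<Sum>a\<in>{a\<in>T. ao P a = i}.
          (let X = N * ((real s - real i) - \<delta>) - real (w a i)
           in if i = 0 then X else max X (real (Max {w a j | j. j < i}))))
        + (\<Sum>a\<in>{a\<in>T. ao P a = rr}. real (Max {w a j | j. j < rr}))"
        by (rule Gamma_unfold[OF assms(4) rr_def rrpos ao_def N_def \<delta>_def])
      also have "\<dots> = (\<Sum>a\<in>T. Gt N \<delta> s rr (w a) (ao P a))"
        by (subst sum_regroup[OF assms(2)]) (simp add: ao_le, simp only: Gt_def)
      finally show ?thesis .
    qed
    have srr: "real s - real rr \<le> \<delta>"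
    proof -
      have "int rr = int s - \<lfloor>\<delta>\<rfloor>" using rr_r assms(5) unfolding \<delta>_def by simp
      then have "real s - real rr = real_of_int \<lfloor>\<delta>\<rfloor>" by linarith
      then show ?thesis by linarith
    qed
    have wb: "\<forall>k<rr. 2 * real (w a k) \<le> N * ((real s - real k) - \<delta>)" if "a \<in> T" for a
    proof (intro allI impI)
      fix k assume "k < rr"
      then have "int k < r" using rr_r by simp
      then show "2 * real (w a k) \<le> N * ((real s - real k) - \<delta>)"
      proof -
        have "real (w a k) \<le> N / 2 * ((real s - real k) - \<delta>)"
          using assms(9)[rule_format, OF that \<open>int k < r\<close>] unfolding N_def \<delta>_def .
        then show ?thesis by linarith
      qed
    qed
    have pb: "Gt N \<delta> s rr (w a) (ao Q a) + Gt N \<delta> s rr (w a) (ao R a)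
        \<ge> N * (real s - \<delta>) - N * real (min (ao Q a) (ao R a))" if "a \<in> T" for a
      by (rule pair_bound[OF N0 ao_le ao_le rrpos srr wb[OF that]])
    have summin: "(\<Sum>a\<in>T. min (ao Q a) (ao R a)) \<le> l"
    proof -
      have "(\<Sum>a\<in>T. min (ao Q a) (ao R a)) \<le> (\<Sum>a\<in>T. order a (Q - R))"
        unfolding ao_def by (intro sum_mono min_ao_le_order assms(10))
      also have "\<dots> \<le> degree (Q - R)" using assms(10) assms(2) by (intro sum_order_le) auto
      also have "\<dots> \<le> l" using assms(6,7) degree_diff_le by blast
      finally show ?thesis .
    qed
    have "(\<Sum>a\<in>T. N * (real s - \<delta>) - N * real (min (ao Q a) (ao R a)))
        \<le> Gamma T m s d l r w h Q + Gamma T m s d l r w h R"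
      unfolding Gam sum.distrib[symmetric] by (rule sum_mono) (rule pb)
    moreover have "(\<Sum>a\<in>T. N * (real s - \<delta>) - N * real (min (ao Q a) (ao R a)))
        = real n * N * (real s - \<delta>) - N * real (\<Sum>a\<in>T. min (ao Q a) (ao R a))"
      by (simp add: sum_subtractf sum_distrib_left[symmetric] assms(4))
    moreover have "N * real (\<Sum>a\<in>T. min (ao Q a) (ao R a)) \<le> N * real l"
      proof -
        have "real (\<Sum>a\<in>T. min (ao Q a) (ao R a)) \<le> real l" using summin by (simp only: of_nat_le_iff)
        then show ?thesis using N0 by (rule mult_left_mono)
      qed
    moreover have "real n * N * (real s - \<delta>) - N * real l = real n ^ m * (real s - real d / real n)"
    proof -
      have "real n ^ m * (real s - real d / real n) = real n * N * (real s - \<delta> - real l / real n)"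
        using nN dl by simp
      also have "\<dots> = real n * N * (real s - \<delta>) - N * real l" using npos by (simp add: field_simps)
      finally show ?thesis by simp
    qed
    ultimately show ?thesis by linarith
  qed
qed


end
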